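(* $FUG\equiv_c FLO$.
   Context: Conventions: every structure is for a finite relational language and has universe a subset of $\omega$; a class of structures is a collection of structures for one fixed finite relational language closed under isomorphism. $D(\mathcal{A})$ is the atomic diagram of $\mathcal{A}$. A computable transformation from $K$ to $K'$ is a c.e. set $\Phi$ of pairs $(\alpha,\varphi)$, $\alpha$ a finite subset of the atomic diagram of a finite structure in the language of $K$, $\varphi$ an atomic sentence or negation of one in the language of $K'$, such that for every $\mathcal{A}\in K$, $\{\varphi:(\exists\alpha\subseteq D(\mathcal{A}))(\alpha,\varphi)\in\Phi\}=D(\mathcal{B})$ for some $\mathcal{B}\in K'$, written $\Phi(\mathcal{A})=\mathcal{B}$. A computable embedding is a computable transformation with $\mathcal{A}\cong\mathcal{A}'\iff\Phi(\mathcal{A})\cong\Phi(\mathcal{A}')$ for all $\mathcal{A},\mathcal{A}'\in K$; $K\le_c K'$ means one exists, and $K\equiv_c K'$ means $K\le_c K'$ and $K'\le_c K$. $FUG$ is the class of finite undirected graphs; $FLO$ is the class of finite linear orders. *)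

theory Defs
  imports Main "HOL-Library.Nat_Bijection"
begin

datatype recf = Z | S | Id nat | Cn recf "recf list" | Pr recf recf | Mn recf

inductive eval :: "recf \<Rightarrow> nat list \<Rightarrow> nat \<Rightarrow> bool" where
  eval_Z: "eval Z xs 0"
| eval_S: "eval S (x # xs) (Suc x)"
| eval_Id: "i < length xs \<Longrightarrow> eval (Id i) xs (xs ! i)"
| eval_Cn: "length ys = length gs \<Longrightarrow> (\<forall>i < length gs. eval (gs ! i) xs (ys ! i))
            \<Longrightarrow> eval f ys z \<Longrightarrow> eval (Cn f gs) xs z"
| eval_Pr0: "eval f xs y \<Longrightarrow> eval (Pr f g) (0 # xs) y"
| eval_PrS: "eval (Pr f g) (n # xs) y \<Longrightarrow> eval g (y # n # xs) z
            \<Longrightarrow> eval (Pr f g) (Suc n # xs) z"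
| eval_Mn: "eval f (n # xs) 0 \<Longrightarrow> (\<forall>m < n. \<exists>y. eval f (m # xs) (Suc y))
            \<Longrightarrow> eval (Mn f) xs n"

definition ce :: "nat set \<Rightarrow> bool" where
  "ce A \<longleftrightarrow> (\<exists>f. A = {x. \<exists>y. eval f [x] y})"

text \<open>A structure: universe (subset of omega) and interpretation of the binary relation.\<close>
type_synonym struc = "nat set \<times> (nat \<times> nat) set"

definition wf_struc :: "struc \<Rightarrow> bool" where
  "wf_struc A \<longleftrightarrow> snd A \<subseteq> fst A \<times> fst A"

text \<open>Atomic sentences with constants for elements of omega: equality and the relation.\<close>
datatype atom = Eq nat nat | Rel nat nat

text \<open>Literal: (True, a) is the atomic sentence a, (False, a) its negation.\<close>
type_synonym literal = "bool \<times> atom"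

definition diagram :: "struc \<Rightarrow> literal set" where
  "diagram A =
     {(True, Eq a b) | a b. a \<in> fst A \<and> b \<in> fst A \<and> a = b}
   \<union> {(False, Eq a b) | a b. a \<in> fst A \<and> b \<in> fst A \<and> a \<noteq> b}
   \<union> {(True, Rel a b) | a b. a \<in> fst A \<and> b \<in> fst A \<and> (a, b) \<in> snd A}
   \<union> {(False, Rel a b) | a b. a \<in> fst A \<and> b \<in> fst A \<and> (a, b) \<notin> snd A}"

definition iso :: "struc \<Rightarrow> struc \<Rightarrow> bool" where
  "iso A B \<longleftrightarrow> (\<exists>f. bij_betw f (fst A) (fst B) \<and>
      (\<forall>a \<in> fst A. \<forall>b \<in> fst A. (a, b) \<in> snd A \<longleftrightarrow> (f a, f b) \<in> snd B))"

definition FUG :: "struc set" where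
  "FUG = {A. wf_struc A \<and> finite (fst A) \<and> sym (snd A) \<and> irrefl (snd A)}"

definition FLO :: "struc set" where
  "FLO = {A. wf_struc A \<and> finite (fst A) \<and> strict_linear_order_on (fst A) (snd A)}"

fun enc_atom :: "atom \<Rightarrow> nat" where
  "enc_atom (Eq a b) = prod_encode (0, prod_encode (a, b))"
| "enc_atom (Rel a b) = prod_encode (1, prod_encode (a, b))"

definition enc_lit :: "literal \<Rightarrow> nat" where
  "enc_lit l = prod_encode (if fst l then 1 else 0, enc_atom (snd l))"

definition enc_pair :: "literal set \<times> literal \<Rightarrow> nat" where
  "enc_pair p = prod_encode (set_encode (enc_lit ` fst p), enc_lit (snd p))"

definition apply_trans :: "(literal set \<times> literal) set \<Rightarrow> struc \<Rightarrow> literal set" where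
  "apply_trans \<Phi> A = {\<phi>. \<exists>\<alpha>. \<alpha> \<subseteq> diagram A \<and> (\<alpha>, \<phi>) \<in> \<Phi>}"

definition comp_transformation ::
    "(literal set \<times> literal) set \<Rightarrow> struc set \<Rightarrow> struc set \<Rightarrow> bool" where
  "comp_transformation \<Phi> K K' \<longleftrightarrow>
     ce (enc_pair ` \<Phi>) \<and>
     (\<forall>(\<alpha>, \<phi>) \<in> \<Phi>. finite \<alpha> \<and>
        (\<exists>B. wf_struc B \<and> finite (fst B) \<and> \<alpha> \<subseteq> diagram B)) \<and>
     (\<forall>A \<in> K. \<exists>B \<in> K'. apply_trans \<Phi> A = diagram B)"

definition comp_embedding ::
    "(literal set \<times> literal) set \<Rightarrow> struc set \<Rightarrow> struc set \<Rightarrow> bool" where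
  "comp_embedding \<Phi> K K' \<longleftrightarrow>
     comp_transformation \<Phi> K K' \<and>
     (\<forall>A \<in> K. \<forall>A' \<in> K. \<forall>B \<in> K'. \<forall>B' \<in> K'.
        apply_trans \<Phi> A = diagram B \<longrightarrow> apply_trans \<Phi> A' = diagram B' \<longrightarrow>
        (iso A A' \<longleftrightarrow> iso B B'))"

definition c_reducible :: "struc set \<Rightarrow> struc set \<Rightarrow> bool" (infix "\<le>\<^sub>c" 50) where
  "K \<le>\<^sub>c K' \<longleftrightarrow> (\<exists>\<Phi>. comp_embedding \<Phi> K K')"

definition c_equivalent :: "struc set \<Rightarrow> struc set \<Rightarrow> bool" (infix "\<equiv>\<^sub>c" 50) where
  "K \<equiv>\<^sub>c K' \<longleftrightarrow> K \<le>\<^sub>c K' \<and> K' \<le>\<^sub>c K"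

end

theory Submission
  imports Defs
begin


lemma eval_det: "eval f xs y \<Longrightarrow> eval f xs y' \<Longrightarrow> y = y'"
proof (induction arbitrary: y' rule: eval.induct)
  case (eval_Z xs)
  from eval_Z.prems show ?case by (cases rule: eval.cases) auto
next
  case (eval_S x xs)
  from eval_S.prems show ?case by (cases rule: eval.cases) auto
next
  case (eval_Id i xs)
  from eval_Id.prems show ?case by (cases rule: eval.cases) (use eval_Id.hyps in auto)
next
  case (eval_Cn ys gs xs f z)
  note outer = eval_Cn
  from eval_Cn.prems show ?case
  proof (cases rule: eval.cases)
    case (eval_Cn ys')
    have "ys = ys'"
      using outer eval_Cn
      by (intro nth_equalityI) auto
    then show ?thesis using outer eval_Cn by auto
  qed
next
  case (eval_Pr0 f xs y g)
  from eval_Pr0.prems show ?case by (cases rule: eval.cases) (use eval_Pr0 in auto)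
next
  case (eval_PrS f g n xs y z)
  from eval_PrS.prems show ?case
    by (cases rule: eval.cases) (use eval_PrS in auto)
next
  case (eval_Mn f n xs)
  note outer = eval_Mn
  from eval_Mn.prems show ?case
  proof (cases rule: eval.cases)
    case eval_Mn
    note inner = this
    show ?thesis
    proof (rule ccontr)
      assume "n \<noteq> y'"
      then have "n < y' \<or> y' < n" by arith
      then show False
      proof
        assume "n < y'"
        then obtain y where "eval f (n # xs) (Suc y)" using inner by auto
        then show False using outer by fastforce
      next
        assume "y' < n"
        then obtain y where "eval f (y' # xs) (Suc y)" "\<And>y''. eval f (y' # xs) y'' \<Longrightarrow> Suc y = y''"
          using outer by blast
        then show False using inner by fastforce
      qed
    qed
  qed
qed

definition pfn :: "nat \<Rightarrow> (nat list \<Rightarrow> nat) \<Rightarrow> bool" where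
  "pfn n F \<longleftrightarrow> (\<exists>r. \<forall>xs. length xs = n \<longrightarrow> eval r xs (F xs))"

definition ppd :: "nat \<Rightarrow> (nat list \<Rightarrow> bool) \<Rightarrow> bool" where
  "ppd n P \<longleftrightarrow> pfn n (\<lambda>xs. if P xs then 1 else 0)"

lemma prf_cong: "pfn n f \<Longrightarrow> (\<And>xs. length xs = n \<Longrightarrow> f xs = g xs) \<Longrightarrow> pfn n g"
  unfolding pfn_def by metis

lemma prf_zero: "pfn n (\<lambda>_. 0)"
  unfolding pfn_def using eval_Z by blast

lemma prf_nth: "i < n \<Longrightarrow> pfn n (\<lambda>xs. xs ! i)"
  unfolding pfn_def using eval_Id by auto

lemma prf_S1: "pfn 1 (\<lambda>xs. Suc (xs ! 0))"
  unfolding pfn_def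
proof (intro exI allI impI)
  fix xs :: "nat list" assume "length xs = 1"
  then obtain x where "xs = [x]" by (auto simp: length_Suc_conv)
  then show "eval S xs (Suc (xs ! 0))" using eval_S by auto
qed

lemma prf_comp:
  assumes "pfn m f" "\<And>i. i < m \<Longrightarrow> pfn n (gs i)"
  shows "pfn n (\<lambda>xs. f (map (\<lambda>i. gs i xs) [0..<m]))"
proof -
  obtain rf where rf: "\<forall>xs. length xs = m \<longrightarrow> eval rf xs (f xs)" using assms(1) pfn_def by auto
  have "\<forall>i\<in>{..<m}. \<exists>r. \<forall>xs. length xs = n \<longrightarrow> eval r xs (gs i xs)" using assms(2) pfn_def by auto
  then obtain R where R: "\<And>i. i<m \<Longrightarrow> \<forall>xs. length xs = n \<longrightarrow> eval (R i) xs (gs i xs)"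
    by (metis lessThan_iff)
  show ?thesis unfolding pfn_def
  proof (intro exI allI impI)
    fix xs :: "nat list" assume "length xs = n"
    show "eval (Cn rf (map R [0..<m])) xs (f (map (\<lambda>i. gs i xs) [0..<m]))"
      by (rule eval_Cn[where ys="map (\<lambda>i. gs i xs) [0..<m]"]) (use rf R \<open>length xs = n\<close> in auto)
  qed
qed

lemma prf_comp1: "pfn 1 f \<Longrightarrow> pfn n g \<Longrightarrow> pfn n (\<lambda>xs. f [g xs])"
  using prf_comp[of 1 f n "\<lambda>i. g"] by simp

lemma prf_comp2: "pfn 2 f \<Longrightarrow> pfn n g \<Longrightarrow> pfn n h \<Longrightarrow> pfn n (\<lambda>xs. f [g xs, h xs])"
  using prf_comp[of 2 f n "\<lambda>i. if i = 0 then g else h"] by (simp add: numeral_2_eq_2 less_Suc_eq)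

lemma prf_Suc: "pfn n f \<Longrightarrow> pfn n (\<lambda>xs. Suc (f xs))"
  using prf_comp1[OF prf_S1] by simp

lemma prf_const: "pfn n (\<lambda>_. c)"
  by (induction c) (auto intro: prf_zero dest: prf_Suc)

fun PR :: "(nat list \<Rightarrow> nat) \<Rightarrow> (nat list \<Rightarrow> nat) \<Rightarrow> nat \<Rightarrow> nat list \<Rightarrow> nat" where
  "PR f g 0 ys = f ys"
| "PR f g (Suc k) ys = g (PR f g k ys # k # ys)"

lemma prf_PR:
  assumes "pfn n f" "pfn (Suc (Suc n)) g"
  shows "pfn (Suc n) (\<lambda>xs. PR f g (hd xs) (tl xs))"
proof -
  obtain rf where rf: "\<forall>xs. length xs = n \<longrightarrow> eval rf xs (f xs)" using assms(1) pfn_def by auto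
  obtain rg where rg: "\<forall>xs. length xs = Suc (Suc n) \<longrightarrow> eval rg xs (g xs)" using assms(2) pfn_def by auto
  have *: "eval (Pr rf rg) (k # ys) (PR f g k ys)" if "length ys = n" for k ys
    using that
  proof (induction k)
    case 0 then show ?case using rf by (auto intro: eval_Pr0)
  next
    case (Suc k)
    show ?case by (rule eval_PrS[OF Suc.IH[OF Suc.prems]]) (use rg Suc.prems in auto)
  qed
  show ?thesis unfolding pfn_def
  proof (intro exI allI impI)
    fix xs :: "nat list" assume "length xs = Suc n"
    then show "eval (Pr rf rg) xs (PR f g (hd xs) (tl xs))"
      using *[of "tl xs" "hd xs"] by (cases xs) auto
  qed
qed

lemma map_nth_Suc_tl: "length ys = Suc n \<Longrightarrow> map (\<lambda>i. ys ! Suc i) [0..<n] = tl ys"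
  by (rule nth_equalityI) (auto simp: nth_tl)

lemma prf_tl: "pfn n f \<Longrightarrow> pfn (Suc n) (\<lambda>ys. f (tl ys))"
proof -
  assume a: "pfn n f"
  have "pfn (Suc n) (\<lambda>xs. f (map (\<lambda>i. xs ! Suc i) [0..<n]))"
    by (rule prf_comp[OF a]) (rule prf_nth, simp)
  then show ?thesis by (rule prf_cong) (simp add: map_nth_Suc_tl)
qed

lemma prf_hd: "pfn (Suc n) (\<lambda>ys. hd ys)"
  by (rule prf_cong[OF prf_nth[of 0]]) (auto simp: length_Suc_conv)

lemma map_cons_aux: "length xs = n \<Longrightarrow>
  map (\<lambda>i. if i = 0 then a else xs ! (i - 1)) [0..<Suc n] = a # xs"
  by (rule nth_equalityI) (auto simp del: upt_Suc simp: nth_Cons')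

lemma prf_cons: "pfn (Suc n) h \<Longrightarrow> pfn n g \<Longrightarrow> pfn n (\<lambda>xs. h (g xs # xs))"
proof -
  assume a: "pfn (Suc n) h" "pfn n g"
  have "pfn n (\<lambda>xs. h (map (\<lambda>i. if i = 0 then g xs else xs ! (i - 1)) [0..<Suc n]))"
  proof (rule prf_comp[OF a(1)])
    fix i assume "i < Suc n"
    then show "pfn n (\<lambda>xs. if i = 0 then g xs else xs ! (i - 1))"
      using a(2) by (cases "i = 0") (auto intro: prf_nth)
  qed
  then show ?thesis by (rule prf_cong) (simp del: upt_Suc add: map_cons_aux)
qed

lemma prf_PR2: "pfn 1 f \<Longrightarrow> pfn 3 g \<Longrightarrow> pfn 2 (\<lambda>xs. PR f g (hd xs) (tl xs))"
  using prf_PR[of 1 f g] by (simp add: numeral_2_eq_2 numeral_3_eq_3)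

lemma prf_PR1: "pfn 0 f \<Longrightarrow> pfn 2 g \<Longrightarrow> pfn 1 (\<lambda>xs. PR f g (hd xs) (tl xs))"
  using prf_PR[of 0 f g] by (simp add: numeral_2_eq_2)

lemma len2: "length xs = 2 \<Longrightarrow> \<exists>a b. xs = [a, b]"
  by (auto simp: length_Suc_conv numeral_2_eq_2)

lemma PR_add: "PR (\<lambda>ys. ys ! 0) (\<lambda>zs. Suc (zs ! 0)) k ys = k + ys ! 0"
  by (induction k) auto

lemma prf_add2: "pfn 2 (\<lambda>xs. xs ! 0 + xs ! 1)"
proof -
  have "pfn 2 (\<lambda>xs. PR (\<lambda>ys. ys ! 0) (\<lambda>zs. Suc (zs ! 0)) (hd xs) (tl xs))"
    by (intro prf_PR2 prf_nth prf_Suc) simp_all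
  then show ?thesis
    by (rule prf_cong) (auto simp: PR_add dest!: len2)
qed

lemma prf_add: "pfn n f \<Longrightarrow> pfn n g \<Longrightarrow> pfn n (\<lambda>xs. f xs + g xs)"
  using prf_comp2[OF prf_add2] by simp

lemma PR_mult: "PR (\<lambda>_. 0) (\<lambda>zs. zs ! 0 + zs ! 2) k [y] = k * y"
  by (induction k) auto

lemma prf_mult2: "pfn 2 (\<lambda>xs. xs ! 0 * xs ! 1)"
proof -
  have "pfn 2 (\<lambda>xs. PR (\<lambda>_. 0) (\<lambda>zs. zs ! 0 + zs ! 2) (hd xs) (tl xs))"
    by (intro prf_PR2 prf_nth prf_add prf_zero) simp_all
  then show ?thesis
    by (rule prf_cong) (auto simp: PR_mult dest!: len2)
qed

lemma prf_mult: "pfn n f \<Longrightarrow> pfn n g \<Longrightarrow> pfn n (\<lambda>xs. f xs * g xs)"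
  using prf_comp2[OF prf_mult2] by simp

lemma PR_pred: "PR (\<lambda>_. 0) (\<lambda>zs. zs ! Suc 0) k [] = k - 1"
  by (induction k) auto

lemma prf_pred1: "pfn 1 (\<lambda>xs. xs ! 0 - 1)"
proof -
  have "pfn 1 (\<lambda>xs. PR (\<lambda>_. 0) (\<lambda>zs. zs ! Suc 0) (hd xs) (tl xs))"
    by (intro prf_PR1 prf_nth prf_zero) simp_all
  then show ?thesis
    by (rule prf_cong) (auto simp: PR_pred length_Suc_conv)
qed

lemma prf_pred: "pfn n f \<Longrightarrow> pfn n (\<lambda>xs. f xs - Suc 0)"
  using prf_comp1[OF prf_pred1] by simp

lemma PR_minus: "PR (\<lambda>ys. ys ! 0) (\<lambda>zs. zs ! 0 - Suc 0) k [x] = x - k"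
  by (induction k) auto

lemma prf_minus2: "pfn 2 (\<lambda>xs. xs ! 1 - xs ! 0)"
proof -
  have "pfn 2 (\<lambda>xs. PR (\<lambda>ys. ys ! 0) (\<lambda>zs. zs ! 0 - Suc 0) (hd xs) (tl xs))"
    by (intro prf_PR2 prf_nth prf_pred) simp_all
  then show ?thesis
    by (rule prf_cong) (auto simp: PR_minus dest!: len2)
qed

lemma prf_minus: "pfn n f \<Longrightarrow> pfn n g \<Longrightarrow> pfn n (\<lambda>xs. f xs - g xs)"
  using prf_comp2[OF prf_minus2, of n g f] by simp

lemma PR_pow: "PR (\<lambda>_. Suc 0) (\<lambda>zs. zs ! 0 * zs ! 2) k [x] = x ^ k"
  by (induction k) auto

lemma prf_pow2: "pfn 2 (\<lambda>xs. xs ! 1 ^ xs ! 0)"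
proof -
  have "pfn 2 (\<lambda>xs. PR (\<lambda>_. Suc 0) (\<lambda>zs. zs ! 0 * zs ! 2) (hd xs) (tl xs))"
    by (intro prf_PR2 prf_nth prf_mult prf_const) simp_all
  then show ?thesis
    by (rule prf_cong) (auto simp: PR_pow dest!: len2)
qed

lemma prf_pow: "pfn n f \<Longrightarrow> pfn n g \<Longrightarrow> pfn n (\<lambda>xs. f xs ^ g xs)"
  using prf_comp2[OF prf_pow2, of n g f] by simp

lemma prp_eq: assumes "pfn n f" "pfn n g" shows "ppd n (\<lambda>xs. f xs = g xs)"
  unfolding ppd_def
  apply (rule prf_cong[of n "\<lambda>xs. 1 - ((f xs - g xs) + (g xs - f xs))"])
   apply (intro prf_minus prf_add prf_const assms)
  apply auto
  done

lemma prp_less: assumes "pfn n f" "pfn n g" shows "ppd n (\<lambda>xs. f xs < g xs)"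
  unfolding ppd_def
  apply (rule prf_cong[of n "\<lambda>xs. 1 - (1 - (g xs - f xs))"])
   apply (intro prf_minus prf_const assms)
  apply auto
  done

lemma prp_not: assumes "ppd n P" shows "ppd n (\<lambda>xs. \<not> P xs)"
  unfolding ppd_def
  apply (rule prf_cong[of n "\<lambda>xs. 1 - (if P xs then 1 else 0)"])
   apply (intro prf_minus prf_const assms[unfolded ppd_def])
  apply auto
  done

lemma prp_conj: assumes "ppd n P" "ppd n Q" shows "ppd n (\<lambda>xs. P xs \<and> Q xs)"
  unfolding ppd_def
  apply (rule prf_cong[of n "\<lambda>xs. (if P xs then 1 else 0) * (if Q xs then 1 else 0)"])
   apply (intro prf_mult assms[unfolded ppd_def])
  apply auto
  done

lemma prp_disj: "ppd n P \<Longrightarrow> ppd n Q \<Longrightarrow> ppd n (\<lambda>xs. P xs \<or> Q xs)"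
proof -
  assume "ppd n P" "ppd n Q"
  then have "ppd n (\<lambda>xs. \<not> (\<not> P xs \<and> \<not> Q xs))" by (intro prp_not prp_conj)
  then show ?thesis by simp
qed

lemma prp_imp: "ppd n P \<Longrightarrow> ppd n Q \<Longrightarrow> ppd n (\<lambda>xs. P xs \<longrightarrow> Q xs)"
proof -
  assume "ppd n P" "ppd n Q"
  then have "ppd n (\<lambda>xs. \<not> P xs \<or> Q xs)" by (intro prp_not prp_disj)
  then show ?thesis by simp
qed

lemma prp_le: "pfn n f \<Longrightarrow> pfn n g \<Longrightarrow> ppd n (\<lambda>xs. f xs \<le> g xs)"
proof -
  assume "pfn n f" "pfn n g"
  then have "ppd n (\<lambda>xs. \<not> g xs < f xs)" by (intro prp_not prp_less)
  then show ?thesis by (simp add: not_less)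
qed

lemma prp_neq: "pfn n f \<Longrightarrow> pfn n g \<Longrightarrow> ppd n (\<lambda>xs. f xs \<noteq> g xs)"
  by (intro prp_not prp_eq)

lemma prf_if: assumes "ppd n P" "pfn n f" "pfn n g" shows "pfn n (\<lambda>xs. if P xs then f xs else g xs)"
  apply (rule prf_cong[of n "\<lambda>xs. (if P xs then 1 else 0) * f xs + (1 - (if P xs then 1 else 0)) * g xs"])
   apply (intro prf_add prf_mult prf_minus prf_const assms[unfolded ppd_def] assms)
  apply auto
  done

lemma PR_mod: "PR (\<lambda>_. 0) (\<lambda>zs. if Suc (zs ! 0) = zs ! 2 then 0 else Suc (zs ! 0)) k [d] = k mod d"
  by (induction k) (auto simp: mod_Suc)

lemma prf_mod2: "pfn 2 (\<lambda>xs. xs ! 0 mod xs ! 1)"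
proof -
  have "pfn 2 (\<lambda>xs. PR (\<lambda>_. 0) (\<lambda>zs. if Suc (zs ! 0) = zs ! 2 then 0 else Suc (zs ! 0)) (hd xs) (tl xs))"
    by (intro prf_PR2 prf_nth prf_if prp_eq prf_Suc prf_const) simp_all
  then show ?thesis
    by (rule prf_cong) (auto simp: PR_mod dest!: len2)
qed

lemma prf_mod: "pfn n f \<Longrightarrow> pfn n g \<Longrightarrow> pfn n (\<lambda>xs. f xs mod g xs)"
  using prf_comp2[OF prf_mod2] by simp

lemma PR_div: "PR (\<lambda>_. 0) (\<lambda>zs. if Suc (zs ! Suc 0) mod zs ! 2 = 0 then Suc (zs ! 0) else zs ! 0) k [d] = k div d"
  by (induction k) (auto simp: div_Suc)

lemma prf_div2: "pfn 2 (\<lambda>xs. xs ! 0 div xs ! 1)"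
proof -
  have "pfn 2 (\<lambda>xs. PR (\<lambda>_. 0) (\<lambda>zs. if Suc (zs ! Suc 0) mod zs ! 2 = 0 then Suc (zs ! 0) else zs ! 0) (hd xs) (tl xs))"
    by (intro prf_PR2 prf_nth prf_if prp_eq prf_Suc prf_const prf_mod) simp_all
  then show ?thesis
    by (rule prf_cong) (auto simp: PR_div dest!: len2)
qed

lemma prf_div: "pfn n f \<Longrightarrow> pfn n g \<Longrightarrow> pfn n (\<lambda>xs. f xs div g xs)"
  using prf_comp2[OF prf_div2] by simp

lemma PR_sum: "PR (\<lambda>_. 0) (\<lambda>zs. zs ! 0 + F (zs ! Suc 0) (tl (tl zs))) k xs = (\<Sum>i<k. F i xs)"
  by (induction k) auto

lemma prf_sum:
  assumes "pfn (Suc n) (\<lambda>ys. F (hd ys) (tl ys))" "pfn n g"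
  shows "pfn n (\<lambda>xs. \<Sum>i<g xs. F i xs)"
proof -
  have "pfn (Suc (Suc n)) (\<lambda>zs. zs ! 0 + (\<lambda>ys. F (hd ys) (tl ys)) (tl zs))"
    by (intro prf_add prf_nth prf_tl assms(1)) simp
  then have "pfn (Suc (Suc n)) (\<lambda>zs. zs ! 0 + F (zs ! Suc 0) (tl (tl zs)))"
    by (rule prf_cong) (auto simp: length_Suc_conv)
  then have "pfn (Suc n) (\<lambda>xs. PR (\<lambda>_. 0) (\<lambda>zs. zs ! 0 + F (zs ! Suc 0) (tl (tl zs))) (hd xs) (tl xs))"
    by (intro prf_PR prf_zero)
  then have "pfn n (\<lambda>xs. (\<lambda>xs. PR (\<lambda>_. 0) (\<lambda>zs. zs ! 0 + F (zs ! Suc 0) (tl (tl zs))) (hd xs) (tl xs)) (g xs # xs))"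
    by (rule prf_cons) (rule assms(2))
  then show ?thesis by (simp add: PR_sum)
qed

lemma sum_char: "(1::nat) - (1 - (\<Sum>i<(k::nat). if P i then 1 else 0)) = (if \<exists>i<k. P i then 1 else 0)"
proof (cases "\<exists>i<k. P i")
  case True
  then obtain j where "j < k" "P j" by blast
  have "(if P j then 1 else 0::nat) \<le> (\<Sum>i<k. if P i then 1 else 0)"
    by (rule member_le_sum) (use \<open>j < k\<close> in auto)
  then have "1 \<le> (\<Sum>i<k. if P i then 1 else 0::nat)" using \<open>P j\<close> by simp
  then show ?thesis using True by simp
next
  case False
  then show ?thesis by auto
qed

lemma prp_ex:
  assumes "ppd (Suc n) (\<lambda>ys. P (hd ys) (tl ys))" "pfn n g"
  shows "ppd n (\<lambda>xs. \<exists>i<g xs. P i xs)"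
proof -
  have "pfn n (\<lambda>xs. 1 - (1 - (\<Sum>i<g xs. (\<lambda>i xs. if P i xs then 1 else 0) i xs)))"
    by (intro prf_minus prf_const prf_sum assms(2)) (use assms(1) in \<open>simp add: ppd_def\<close>)
  then show ?thesis unfolding ppd_def
    by (rule prf_cong) (simp only: sum_char)
qed

lemma prp_all:
  assumes "ppd (Suc n) (\<lambda>ys. P (hd ys) (tl ys))" "pfn n g"
  shows "ppd n (\<lambda>xs. \<forall>i<g xs. P i xs)"
proof -
  have "ppd n (\<lambda>xs. \<not> (\<exists>i<g xs. \<not> P i xs))"
    by (intro prp_not prp_ex[where P="\<lambda>i xs. \<not> P i xs"] assms(2)) (use assms(1) prp_not in auto)
  then show ?thesis by simp
qed

lemma prf_prod_encode: "pfn n f \<Longrightarrow> pfn n g \<Longrightarrow> pfn n (\<lambda>xs. prod_encode (f xs, g xs))"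
  unfolding prod_encode_def triangle_def
  by (auto intro!: prf_add prf_mult prf_div prf_Suc prf_const)

lemma ce_search:
  assumes "ppd 2 (\<lambda>xs. P (xs ! 0) (xs ! 1))"
  shows "ce {x. \<exists>c. P c x}"
proof -
  have "ppd 2 (\<lambda>xs. \<not> P (xs ! 0) (xs ! 1))" using assms by (rule prp_not)
  then obtain r where r: "\<And>xs. length xs = 2 \<Longrightarrow> eval r xs (if \<not> P (xs ! 0) (xs ! 1) then 1 else 0)"
    unfolding ppd_def pfn_def by auto
  have "{x. \<exists>c. P c x} = {x. \<exists>y. eval (Mn r) [x] y}"
  proof (intro set_eqI iffI; simp)
    fix x assume "\<exists>c. P c x"
    define n where "n = (LEAST c. P c x)"
    have "P n x" unfolding n_def using \<open>\<exists>c. P c x\<close> by (metis LeastI)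
    have "\<not> P m x" if "m < n" for m using that not_less_Least unfolding n_def by blast
    have "eval (Mn r) [x] n"
    proof (rule eval_Mn)
      show "eval r [n, x] 0" using r[of "[n, x]"] \<open>P n x\<close> by simp
      show "\<forall>m<n. \<exists>y. eval r [m, x] (Suc y)"
      proof (intro allI impI)
        fix m assume "m < n"
        then have "\<not> P m x" using \<open>\<And>m. m < n \<Longrightarrow> \<not> P m x\<close> by blast
        then have "eval r [m, x] (Suc 0)" using r[of "[m, x]"] by simp
        then show "\<exists>y. eval r [m, x] (Suc y)" by blast
      qed
    qed
    then show "\<exists>y. eval (Mn r) [x] y" by blast
  next
    fix x assume "\<exists>y. eval (Mn r) [x] y"
    then obtain y where "eval (Mn r) [x] y" by blast
    then have "eval r [y, x] 0" by (cases rule: eval.cases) auto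
    moreover have "eval r [y, x] (if \<not> P y x then 1 else 0)" using r[of "[y, x]"] by simp
    ultimately have "(if \<not> P y x then 1 else 0) = (0::nat)" using eval_det by metis
    then have "P y x" by (cases "P y x") auto
    then show "\<exists>c. P c x" by blast
  qed
  then show ?thesis unfolding ce_def by blast
qed



lemma diag_mem: "(p, at) \<in> diagram A \<longleftrightarrow> (case at of
    Eq a b \<Rightarrow> a \<in> fst A \<and> b \<in> fst A \<and> (a = b) = p
  | Rel a b \<Rightarrow> a \<in> fst A \<and> b \<in> fst A \<and> ((a, b) \<in> snd A) = p)"
  by (cases at; cases p) (auto simp: diagram_def)

lemma diag_mem_simps[simp]:
  "(p, Eq a b) \<in> diagram A \<longleftrightarrow> a \<in> fst A \<and> b \<in> fst A \<and> (a = b) = p"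
  "(p, Rel a b) \<in> diagram A \<longleftrightarrow> a \<in> fst A \<and> b \<in> fst A \<and> ((a, b) \<in> snd A) = p"
  by (simp_all add: diag_mem)

lemma diagram_inj:
  assumes "wf_struc A" "wf_struc B" "diagram A = diagram B"
  shows "A = B"
proof -
  have f: "fst A = fst B"
  proof
    show "fst A \<subseteq> fst B"
      using assms(3) diag_mem_simps(1)[of True _ _ A] diag_mem_simps(1)[of True _ _ B] by blast
    show "fst B \<subseteq> fst A"
      using assms(3) diag_mem_simps(1)[of True _ _ A] diag_mem_simps(1)[of True _ _ B] by blast
  qed
  have s: "snd A = snd B"
  proof
    show "snd A \<subseteq> snd B"
    proof
      fix x assume x: "x \<in> snd A"
      obtain a b where ab: "x = (a, b)" by force
      with x assms(1) have "a \<in> fst A" "b \<in> fst A" by (auto simp: wf_struc_def)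
      then have "(True, Rel a b) \<in> diagram A" using x ab by simp
      then have "(True, Rel a b) \<in> diagram B" using assms(3) by simp
      then show "x \<in> snd B" using ab by simp
    qed
    show "snd B \<subseteq> snd A"
    proof
      fix x assume x: "x \<in> snd B"
      obtain a b where ab: "x = (a, b)" by force
      with x assms(2) have "a \<in> fst B" "b \<in> fst B" by (auto simp: wf_struc_def)
      then have "(True, Rel a b) \<in> diagram B" using x ab by simp
      then have "(True, Rel a b) \<in> diagram A" using assms(3) by simp
      then show "x \<in> snd A" using ab by simp
    qed
  qed
  show ?thesis using f s by (simp add: prod_eq_iff)
qed

lemma iso_sym: "iso A B \<Longrightarrow> iso B A"
proof -
  assume "iso A B"
  then obtain f where f: "bij_betw f (fst A) (fst B)"
    "\<forall>a \<in> fst A. \<forall>b \<in> fst A. (a, b) \<in> snd A \<longleftrightarrow> (f a, f b) \<in> snd B"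
    unfolding iso_def by blast
  let ?g = "inv_into (fst A) f"
  have g: "bij_betw ?g (fst B) (fst A)" using f(1) by (rule bij_betw_inv_into)
  have "\<forall>a \<in> fst B. \<forall>b \<in> fst B. (a, b) \<in> snd B \<longleftrightarrow> (?g a, ?g b) \<in> snd A"
  proof (intro ballI)
    fix a b assume "a \<in> fst B" "b \<in> fst B"
    then have "?g a \<in> fst A" "?g b \<in> fst A" "f (?g a) = a" "f (?g b) = b"
      using g f(1) by (auto simp: bij_betw_def f_inv_into_f)
    then show "(a, b) \<in> snd B \<longleftrightarrow> (?g a, ?g b) \<in> snd A" using f(2) by metis
  qed
  then show ?thesis unfolding iso_def using g by blast
qed

lemma iso_trans: "iso A B \<Longrightarrow> iso B C \<Longrightarrow> iso A C"
proof -
  assume "iso A B" "iso B C"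
  then obtain f g where f: "bij_betw f (fst A) (fst B)"
    "\<forall>a \<in> fst A. \<forall>b \<in> fst A. (a, b) \<in> snd A \<longleftrightarrow> (f a, f b) \<in> snd B"
    and g: "bij_betw g (fst B) (fst C)"
    "\<forall>a \<in> fst B. \<forall>b \<in> fst B. (a, b) \<in> snd B \<longleftrightarrow> (g a, g b) \<in> snd C"
    unfolding iso_def by blast
  have "bij_betw (g \<circ> f) (fst A) (fst C)" using f(1) g(1) by (rule bij_betw_trans)
  moreover have "\<forall>a \<in> fst A. \<forall>b \<in> fst A. (a, b) \<in> snd A \<longleftrightarrow> ((g \<circ> f) a, (g \<circ> f) b) \<in> snd C"
  proof (intro ballI)
    fix a b assume "a \<in> fst A" "b \<in> fst A"
    moreover have "f a \<in> fst B" "f b \<in> fst B" using f(1) calculation by (auto simp: bij_betw_def)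
    ultimately show "(a, b) \<in> snd A \<longleftrightarrow> ((g \<circ> f) a, (g \<circ> f) b) \<in> snd C"
      using f(2) g(2) by simp
  qed
  ultimately show ?thesis unfolding iso_def by blast
qed

lemma iso_card: "iso A B \<Longrightarrow> card (fst A) = card (fst B)"
  unfolding iso_def using bij_betw_same_card by blast

definition lo :: "nat \<Rightarrow> struc" where
  "lo N = ({..<N}, {(i, j). i < j \<and> j < N})"

lemma lo_FLO: "lo N \<in> FLO"
  unfolding FLO_def lo_def wf_struc_def strict_linear_order_on_def
  by (auto simp: trans_def irrefl_def total_on_def)

lemma lo_mono: "a \<le> b \<Longrightarrow> diagram (lo a) \<subseteq> diagram (lo b)"
  unfolding lo_def diagram_def by auto

lemma iso_lo: "iso (lo a) (lo b) \<longleftrightarrow> a = b"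
proof
  assume "iso (lo a) (lo b)"
  then show "a = b" using iso_card[of "lo a" "lo b"] by (simp add: lo_def)
next
  assume "a = b"
  then show "iso (lo a) (lo b)" unfolding iso_def by (intro exI[of _ id]) auto
qed

lemma FLO_iso_lo:
  assumes "A \<in> FLO"
  shows "iso A (lo (card (fst A)))"
proof -
  let ?U = "fst A" and ?R = "snd A"
  have fin: "finite ?U" and wf: "?R \<subseteq> ?U \<times> ?U" and tr: "trans ?R" and irr: "irrefl ?R"
    and tot: "total_on ?U ?R"
    using assms by (auto simp: FLO_def wf_struc_def strict_linear_order_on_def)
  define r where "r a = card {b \<in> ?U. (b, a) \<in> ?R}" for a
  have lt: "r a < r b" if "(a, b) \<in> ?R" for a b
  proof -
    have "{c \<in> ?U. (c, a) \<in> ?R} \<subset> {c \<in> ?U. (c, b) \<in> ?R}"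
    proof
      show "{c \<in> ?U. (c, a) \<in> ?R} \<subseteq> {c \<in> ?U. (c, b) \<in> ?R}"
        using tr that by (auto dest: transD)
      have "a \<in> ?U" using that wf by auto
      moreover have "(a, a) \<notin> ?R" using irr by (auto simp: irrefl_def)
      ultimately show "{c \<in> ?U. (c, a) \<in> ?R} \<noteq> {c \<in> ?U. (c, b) \<in> ?R}" using that by blast
    qed
    then show ?thesis unfolding r_def by (rule psubset_card_mono[rotated]) (use fin in auto)
  qed
  have rng: "r a < card ?U" if "a \<in> ?U" for a
  proof -
    have "{b \<in> ?U. (b, a) \<in> ?R} \<subset> ?U"
      using that irr by (auto simp: irrefl_def)
    then show ?thesis unfolding r_def using fin by (rule psubset_card_mono[rotated])
  qed
  have cmp: "(a, b) \<in> ?R \<longleftrightarrow> r a < r b" if "a \<in> ?U" "b \<in> ?U" for a b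
  proof
    assume "r a < r b"
    show "(a, b) \<in> ?R"
    proof (rule ccontr)
      assume "(a, b) \<notin> ?R"
      then have "a = b \<or> (b, a) \<in> ?R" using tot that by (auto simp: total_on_def)
      then show False using \<open>r a < r b\<close> lt[of b a] by auto
    qed
  qed (rule lt)
  have inj: "inj_on r ?U"
  proof (rule inj_onI)
    fix a b assume "a \<in> ?U" "b \<in> ?U" "r a = r b"
    then show "a = b" using tot lt by (auto simp: total_on_def) (metis less_irrefl)
  qed
  have "r ` ?U = {..<card ?U}"
  proof (rule card_subset_eq)
    show "finite {..<card ?U}" by simp
    show "r ` ?U \<subseteq> {..<card ?U}" using rng by auto
    show "card (r ` ?U) = card {..<card ?U}" using card_image[OF inj] by simp
  qed
  then have "bij_betw r ?U {..<card ?U}" using inj by (simp add: bij_betw_def)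
  moreover have "\<forall>a \<in> ?U. \<forall>b \<in> ?U. (a, b) \<in> ?R \<longleftrightarrow> (r a, r b) \<in> snd (lo (card ?U))"
    using cmp rng by (auto simp: lo_def)
  ultimately show ?thesis unfolding iso_def by (auto simp: lo_def)
qed

lemma FLO_iso_iff:
  assumes "A \<in> FLO" "A' \<in> FLO"
  shows "iso A A' \<longleftrightarrow> card (fst A) = card (fst A')"
proof
  assume "iso A A'" then show "card (fst A) = card (fst A')" by (rule iso_card)
next
  assume c: "card (fst A) = card (fst A')"
  have "iso A (lo (card (fst A)))" using assms(1) by (rule FLO_iso_lo)
  moreover have "iso (lo (card (fst A))) A'"
    using FLO_iso_lo[OF assms(2)] c by (auto intro: iso_sym)
  ultimately show "iso A A'" by (rule iso_trans)
qed

lemma iso_empty_rel: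
  assumes "finite U" "finite U'"
  shows "iso (U, {}) (U', {}) \<longleftrightarrow> card U = card U'"
proof
  assume "iso (U, {}) (U', {})" then show "card U = card U'" using iso_card by fastforce
next
  assume "card U = card U'"
  then obtain f where "bij_betw f U U'" using assms by (metis bij_betw_iff_card)
  then show "iso (U, {}) (U', {})" unfolding iso_def by auto
qed



definition Phi1 :: "(literal set \<times> literal) set" where
"Phi1 = {({(True, Eq a a)}, (True, Eq a a)) | a. True}
 \<union> {({(False, Eq a b)}, (False, Eq a b)) | a b. a \<noteq> b}
 \<union> {({(True, Eq a a)}, (False, Rel a a)) | a. True}
 \<union> {({(False, Eq a b)}, (False, Rel a b)) | a b. a \<noteq> b}"

lemma apply_Phi1: "apply_trans Phi1 A = diagram (fst A, {})"
proof (rule set_eqI)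
  fix l :: literal
  obtain p at where l: "l = (p, at)" by force
  show "l \<in> apply_trans Phi1 A \<longleftrightarrow> l \<in> diagram (fst A, {})"
  proof (cases at)
    case (Eq a b)
    then show ?thesis unfolding l apply_trans_def Phi1_def by (cases p) auto
  next
    case (Rel a b)
    then show ?thesis unfolding l apply_trans_def Phi1_def
      by (cases p; cases "a = b") auto
  qed
qed

lemma enc_lit_simps:
  "enc_lit (True, Eq a b) = prod_encode (1, prod_encode (0, prod_encode (a, b)))"
  "enc_lit (False, Eq a b) = prod_encode (0, prod_encode (0, prod_encode (a, b)))"
  "enc_lit (True, Rel a b) = prod_encode (1, prod_encode (1, prod_encode (a, b)))"
  "enc_lit (False, Rel a b) = prod_encode (0, prod_encode (1, prod_encode (a, b)))"
  by (simp_all add: enc_lit_def)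

lemma enc_pair_single: "enc_pair ({l}, l') = prod_encode (2 ^ enc_lit l, enc_lit l')"
  by (simp add: enc_pair_def)

abbreviation cd :: "nat \<Rightarrow> nat \<Rightarrow> nat \<Rightarrow> nat \<Rightarrow> nat" where
  "cd p t a b \<equiv> prod_encode (p, prod_encode (t, prod_encode (a, b)))"

definition Q1 :: "nat \<Rightarrow> nat \<Rightarrow> nat \<Rightarrow> bool" where
  "Q1 a b x \<longleftrightarrow> x = prod_encode (2 ^ cd 1 0 a a, cd 1 0 a a)
     \<or> (a \<noteq> b \<and> x = prod_encode (2 ^ cd 0 0 a b, cd 0 0 a b))
     \<or> x = prod_encode (2 ^ cd 1 0 a a, cd 0 1 a a)
     \<or> (a \<noteq> b \<and> x = prod_encode (2 ^ cd 0 0 a b, cd 0 1 a b))"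

lemma Phi1_enc: "enc_pair ` Phi1 = {x. \<exists>c. \<exists>a<c. \<exists>b<c. Q1 a b x}"
proof (rule set_eqI, rule iffI)
  fix x assume "x \<in> enc_pair ` Phi1"
  then obtain a b where "Q1 a b x"
    unfolding Phi1_def Q1_def by (auto simp: enc_pair_single enc_lit_simps)
  then show "x \<in> {x. \<exists>c. \<exists>a<c. \<exists>b<c. Q1 a b x}"
  proof -
    have "a < Suc (a + b)" "b < Suc (a + b)" by auto
    then show ?thesis using \<open>Q1 a b x\<close> by blast
  qed
next
  fix x assume "x \<in> {x. \<exists>c. \<exists>a<c. \<exists>b<c. Q1 a b x}"
  then obtain a b where "Q1 a b x" by blast
  then show "x \<in> enc_pair ` Phi1"
    unfolding Q1_def
  proof (elim disjE conjE)
    assume "x = prod_encode (2 ^ cd 1 0 a a, cd 1 0 a a)"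
    then have "x = enc_pair ({(True, Eq a a)}, (True, Eq a a))" by (simp add: enc_pair_single enc_lit_simps)
    then show ?thesis unfolding Phi1_def by blast
  next
    assume "a \<noteq> b" "x = prod_encode (2 ^ cd 0 0 a b, cd 0 0 a b)"
    then have "x = enc_pair ({(False, Eq a b)}, (False, Eq a b))" by (simp add: enc_pair_single enc_lit_simps)
    then show ?thesis unfolding Phi1_def using \<open>a \<noteq> b\<close> by blast
  next
    assume "x = prod_encode (2 ^ cd 1 0 a a, cd 0 1 a a)"
    then have "x = enc_pair ({(True, Eq a a)}, (False, Rel a a))" by (simp add: enc_pair_single enc_lit_simps)
    then show ?thesis unfolding Phi1_def by blast
  next
    assume "a \<noteq> b" "x = prod_encode (2 ^ cd 0 0 a b, cd 0 1 a b)"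
    then have "x = enc_pair ({(False, Eq a b)}, (False, Rel a b))" by (simp add: enc_pair_single enc_lit_simps)
    then show ?thesis unfolding Phi1_def using \<open>a \<noteq> b\<close> by blast
  qed
qed

lemma Phi1_ce: "ce (enc_pair ` Phi1)"
  unfolding Phi1_enc Q1_def
  by (rule ce_search) (intro prp_ex prp_disj prp_conj prp_eq prp_neq prf_prod_encode prf_pow prf_const prf_hd prf_tl prf_nth; simp?)

lemma FLO_le_FUG: "FLO \<le>\<^sub>c FUG"
  unfolding c_reducible_def
proof (intro exI[of _ Phi1])
  show "comp_embedding Phi1 FLO FUG"
    unfolding comp_embedding_def comp_transformation_def
  proof (intro conjI ballI allI impI)
    show "ce (enc_pair ` Phi1)" by (rule Phi1_ce)
  next
    fix p assume "p \<in> Phi1"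
    then show "case p of (\<alpha>, \<phi>) \<Rightarrow> finite \<alpha> \<and> (\<exists>B. wf_struc B \<and> finite (fst B) \<and> \<alpha> \<subseteq> diagram B)"
      unfolding Phi1_def
    proof (elim UnE CollectE exE conjE)
      fix a assume "p = ({(True, Eq a a)}, (True, Eq a a))"
      then show ?thesis by (auto intro!: exI[of _ "({a}, {})"] simp: wf_struc_def)
    next
      fix a assume "p = ({(True, Eq a a)}, (False, Rel a a))"
      then show ?thesis by (auto intro!: exI[of _ "({a}, {})"] simp: wf_struc_def)
    next
      fix a b assume "p = ({(False, Eq a b)}, (False, Eq a b))" "a \<noteq> b"
      then show ?thesis by (auto intro!: exI[of _ "({a, b}, {})"] simp: wf_struc_def)
    next
      fix a b assume "p = ({(False, Eq a b)}, (False, Rel a b))" "a \<noteq> b"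
      then show ?thesis by (auto intro!: exI[of _ "({a, b}, {})"] simp: wf_struc_def)
    qed
  next
    fix A assume "A \<in> FLO"
    then show "\<exists>B\<in>FUG. apply_trans Phi1 A = diagram B"
      by (intro bexI[of _ "(fst A, {})"]) (auto simp: apply_Phi1 FUG_def FLO_def wf_struc_def sym_on_def irrefl_def)
  next
    fix A A' B B' assume as: "A \<in> FLO" "A' \<in> FLO" "B \<in> FUG" "B' \<in> FUG"
      "apply_trans Phi1 A = diagram B" "apply_trans Phi1 A' = diagram B'"
    have "B = (fst A, {})"
      using as(3,5) by (intro diagram_inj) (auto simp: apply_Phi1 FUG_def wf_struc_def)
    moreover have "B' = (fst A', {})"
      using as(4,6) by (intro diagram_inj) (auto simp: apply_Phi1 FUG_def wf_struc_def)
    moreover have "finite (fst A)" "finite (fst A')" using as(1,2) by (auto simp: FLO_def)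
    ultimately show "iso A A' \<longleftrightarrow> iso B B'"
      using FLO_iso_iff[OF as(1,2)] iso_empty_rel by simp
  qed
qed



definition tup :: "nat \<Rightarrow> nat \<Rightarrow> nat \<Rightarrow> nat" where
  "tup c B l = c div B ^ l mod B"

definition alpha :: "nat \<Rightarrow> nat \<Rightarrow> nat \<Rightarrow> nat \<Rightarrow> literal set" where
  "alpha c B k m = (\<lambda>(l1, l2). (odd (m div 2 ^ (l1 * k + l2)), Rel (tup c B l1) (tup c B l2))) ` ({..<k} \<times> {..<k})"

definition cert :: "nat \<Rightarrow> nat \<Rightarrow> nat \<Rightarrow> nat \<Rightarrow> bool" where
  "cert c B k m \<longleftrightarrow> (\<forall>l1<k. \<forall>l2<k. tup c B l1 = tup c B l2 \<longrightarrow> l1 = l2) \<and> m < 2 ^ (k * k)"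

definition val :: "nat \<Rightarrow> nat \<Rightarrow> nat" where
  "val k m = 2 ^ (k * k) + m"

definition Phi2 :: "(literal set \<times> literal) set" where
  "Phi2 = {(alpha c B k m, \<phi>) | c B k m \<phi>. cert c B k m \<and> \<phi> \<in> diagram (lo (val k m))}"

definition good :: "struc \<Rightarrow> nat list \<Rightarrow> nat \<Rightarrow> bool" where
  "good A ts m \<longleftrightarrow> distinct ts \<and> set ts \<subseteq> fst A \<and> m < 2 ^ (length ts * length ts) \<and>
     (\<forall>l1<length ts. \<forall>l2<length ts. ((ts ! l1, ts ! l2) \<in> snd A \<longleftrightarrow> odd (m div 2 ^ (l1 * length ts + l2))))"

lemma alpha_sub:
  assumes "cert c B k m"
  shows "alpha c B k m \<subseteq> diagram A \<longleftrightarrow> good A (map (tup c B) [0..<k]) m"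
proof -
  have d: "distinct (map (tup c B) [0..<k])"
    using assms unfolding cert_def by (auto simp: distinct_conv_nth)
  have "alpha c B k m \<subseteq> diagram A \<longleftrightarrow> (\<forall>l1<k. \<forall>l2<k. tup c B l1 \<in> fst A \<and> tup c B l2 \<in> fst A \<and>
      ((tup c B l1, tup c B l2) \<in> snd A \<longleftrightarrow> odd (m div 2 ^ (l1 * k + l2))))"
    unfolding alpha_def by auto
  also have "\<dots> \<longleftrightarrow> good A (map (tup c B) [0..<k]) m"
    using d assms unfolding good_def cert_def by auto
  finally show ?thesis .
qed

fun enc_list :: "nat \<Rightarrow> nat list \<Rightarrow> nat" where
  "enc_list B [] = 0"
| "enc_list B (d # ds) = d + B * enc_list B ds"

lemma enc_list_digit:
  "(\<forall>d\<in>set ds. d < B) \<Longrightarrow> l < length ds \<Longrightarrow> enc_list B ds div B ^ l mod B = ds ! l"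
proof (induction ds arbitrary: l)
  case Nil then show ?case by simp
next
  case (Cons d ds)
  then have "d < B" by simp
  show ?case
  proof (cases l)
    case 0 then show ?thesis using \<open>d < B\<close> by simp
  next
    case (Suc l')
    have "(d + B * enc_list B ds) div B = enc_list B ds" using \<open>d < B\<close> by simp
    then have "(d + B * enc_list B ds) div B ^ l = enc_list B ds div B ^ l'"
      using Suc by (simp add: div_mult2_eq)
    then show ?thesis using Cons Suc by simp
  qed
qed

lemma tup_surj: "\<exists>c B. map (tup c B) [0..<length ts] = ts"
proof -
  define B where "B = Suc (sum_list ts)"
  have "\<forall>d\<in>set ts. d < B"
  proof
    fix d assume "d \<in> set ts"
    then have "d \<le> sum_list ts" by (rule member_le_sum_list) auto
    then show "d < B" unfolding B_def by simp
  qed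
  then have "map (tup (enc_list B ts) B) [0..<length ts] = ts"
    by (intro nth_equalityI) (auto simp: tup_def enc_list_digit)
  then show ?thesis by blast
qed

definition Vals :: "struc \<Rightarrow> nat set" where
  "Vals A = {val k m | c B k m. cert c B k m \<and> alpha c B k m \<subseteq> diagram A}"

lemma Vals_eq: "Vals A = {val (length ts) m | ts m. good A ts m}"
proof (rule set_eqI, rule iffI)
  fix v assume "v \<in> Vals A"
  then obtain c B k m where "v = val k m" "cert c B k m" "alpha c B k m \<subseteq> diagram A"
    unfolding Vals_def by blast
  then show "v \<in> {val (length ts) m | ts m. good A ts m}"
    using alpha_sub[of c B k m A] by force
next
  fix v assume "v \<in> {val (length ts) m | ts m. good A ts m}"
  then obtain ts m where v: "v = val (length ts) m" "good A ts m" by blast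
  obtain c B where cb: "map (tup c B) [0..<length ts] = ts" using tup_surj by blast
  have tl: "tup c B l = ts ! l" if "l < length ts" for l
  proof -
    have "map (tup c B) [0..<length ts] ! l = tup c B l" using that by simp
    then show ?thesis using cb by simp
  qed
  have "cert c B (length ts) m"
    unfolding cert_def
  proof (intro conjI allI impI)
    fix l1 l2 assume "l1 < length ts" "l2 < length ts" "tup c B l1 = tup c B l2"
    then have "ts ! l1 = ts ! l2" using tl by simp
    then show "l1 = l2" using v(2) \<open>l1 < length ts\<close> \<open>l2 < length ts\<close>
      unfolding good_def by (simp add: nth_eq_iff_index_eq)
  next
    show "m < 2 ^ (length ts * length ts)" using v(2) unfolding good_def by simp
  qed
  moreover have "alpha c B (length ts) m \<subseteq> diagram A"
    using alpha_sub[OF calculation] cb v(2) by simp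
  ultimately show "v \<in> Vals A" unfolding Vals_def using v(1) by blast
qed

lemma apply_Phi2: "apply_trans Phi2 A = {\<phi>. \<exists>v\<in>Vals A. \<phi> \<in> diagram (lo v)}"
  unfolding apply_trans_def Phi2_def Vals_def by blast

lemma set_encode_less: "finite X \<Longrightarrow> X \<subseteq> {..<N} \<Longrightarrow> set_encode X < 2 ^ N"
proof (induction N arbitrary: X)
  case 0 then show ?case by simp
next
  case (Suc N)
  have "X - {N} \<subseteq> {..<N}" using Suc.prems by auto
  then have *: "set_encode (X - {N}) < 2 ^ N" using Suc by auto
  have "set_encode X \<le> 2 ^ N + set_encode (X - {N})"
  proof (cases "N \<in> X")
    case True
    then have "X = insert N (X - {N})" by auto
    moreover have "set_encode (insert N (X - {N})) = 2 ^ N + set_encode (X - {N})"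
      by (rule set_encode_insert) (use Suc.prems in auto)
    ultimately have "set_encode X = 2 ^ N + set_encode (X - {N})" by simp
    then show ?thesis by simp
  next
    case False then show ?thesis by simp
  qed
  then show ?case using * by simp
qed

lemma good_len: "good A ts m \<Longrightarrow> finite (fst A) \<Longrightarrow> length ts \<le> card (fst A)"
proof -
  assume g: "good A ts m" and f: "finite (fst A)"
  then have "distinct ts" "set ts \<subseteq> fst A" unfolding good_def by auto
  then have "card (set ts) \<le> card (fst A)" "card (set ts) = length ts"
    using card_mono[OF f] distinct_card by auto
  then show ?thesis by simp
qed

lemma pair_code_inj:
  fixes l1 l2 l1' l2' n :: nat
  assumes "l1 < n" "l2 < n" "l1' < n" "l2' < n" "l1 * n + l2 = l1' * n + l2'"
  shows "l1 = l1' \<and> l2 = l2'"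
proof -
  have "n > 0" using assms by simp
  have "l1 = (l1 * n + l2) div n" using assms(2) by simp
  also have "\<dots> = (l1' * n + l2') div n" using assms(5) by simp
  also have "\<dots> = l1'" using assms(4) by simp
  finally have 1: "l1 = l1'" .
  have "l2 = (l1 * n + l2) mod n" using assms(2) by simp
  also have "\<dots> = (l1' * n + l2') mod n" using assms(5) by simp
  also have "\<dots> = l2'" using assms(4) by simp
  finally show ?thesis using 1 by simp
qed

lemma pair_code_less: "(l1::nat) < n \<Longrightarrow> l2 < n \<Longrightarrow> l1 * n + l2 < n * n"
proof -
  assume a: "l1 < n" "l2 < n"
  then have "l1 * n + l2 < l1 * n + n" by simp
  also have "\<dots> = Suc l1 * n" by simp
  also have "\<dots> \<le> n * n" using a(1) by (metis Suc_leI mult_le_mono1)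
  finally show ?thesis .
qed

lemma good_full:
  assumes "finite (fst A)"
  shows "\<exists>ts m. good A ts m \<and> length ts = card (fst A)"
proof -
  define ts where "ts = sorted_list_of_set (fst A)"
  define n where "n = length ts"
  have ts: "distinct ts" "set ts = fst A" "length ts = card (fst A)"
    using assms unfolding ts_def by auto
  define SS where "SS = {l1 * n + l2 | l1 l2. l1 < n \<and> l2 < n \<and> (ts ! l1, ts ! l2) \<in> snd A}"
  have SS_sub: "SS \<subseteq> {..<n * n}" unfolding SS_def using pair_code_less by auto
  then have finSS: "finite SS" by (rule finite_subset) simp
  define m where "m = set_encode SS"
  have "m < 2 ^ (n * n)" unfolding m_def using set_encode_less[OF finSS SS_sub] .
  moreover have "(ts ! l1, ts ! l2) \<in> snd A \<longleftrightarrow> odd (m div 2 ^ (l1 * n + l2))" if "l1 < n" "l2 < n" for l1 l2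
  proof -
    have "odd (m div 2 ^ (l1 * n + l2)) \<longleftrightarrow> l1 * n + l2 \<in> set_decode m"
      by (simp add: set_decode_def)
    also have "\<dots> \<longleftrightarrow> l1 * n + l2 \<in> SS" unfolding m_def using finSS by simp
    also have "\<dots> \<longleftrightarrow> (ts ! l1, ts ! l2) \<in> snd A"
    proof
      assume "l1 * n + l2 \<in> SS"
      then obtain l1' l2' where h: "l1 * n + l2 = l1' * n + l2'" "l1' < n" "l2' < n"
        "(ts ! l1', ts ! l2') \<in> snd A" unfolding SS_def by blast
      then have "l1 = l1' \<and> l2 = l2'" using pair_code_inj[OF that h(2,3) h(1)] by blast
      then show "(ts ! l1, ts ! l2) \<in> snd A" using h(4) by simp
    next
      assume "(ts ! l1, ts ! l2) \<in> snd A"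
      then show "l1 * n + l2 \<in> SS" unfolding SS_def using that by blast
    qed
    finally show ?thesis by simp
  qed
  ultimately have "good A ts m" using ts unfolding good_def n_def by auto
  then show ?thesis using ts by blast
qed

lemma val_bounds: "m < 2 ^ (k * k) \<Longrightarrow> 2 ^ (k * k) \<le> val k m \<and> val k m < 2 ^ (k * k + 1)"
  unfolding val_def by simp

lemma sq_step:
  fixes k n :: nat
  assumes "k < n" shows "k * k + 1 \<le> n * n"
proof -
  have h: "Suc k \<le> n" using assms by (rule Suc_leI)
  have "Suc k * Suc k \<le> n * n" using mult_le_mono[OF h h] .
  moreover have "k * k + 1 \<le> Suc k * Suc k" by simp
  ultimately show ?thesis by linarith
qed

lemma Vals_finite_ne:
  assumes "finite (fst A)"
  shows "finite (Vals A)" "Vals A \<noteq> {}"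
    "\<And>v. v \<in> Vals A \<Longrightarrow> v < 2 ^ (card (fst A) * card (fst A) + 1)"
proof -
  let ?n = "card (fst A)"
  show bnd: "v < 2 ^ (?n * ?n + 1)" if v: "v \<in> Vals A" for v
  proof -
    obtain ts m where tm: "v = val (length ts) m" "good A ts m" using v unfolding Vals_eq by blast
    let ?k = "length ts"
    have h: "?k \<le> ?n" using good_len[OF tm(2) assms] .
    have "?k * ?k \<le> ?n * ?n" using mult_le_mono[OF h h] .
    then have "?k * ?k + 1 \<le> ?n * ?n + 1" by simp
    then have "(2::nat) ^ (?k * ?k + 1) \<le> 2 ^ (?n * ?n + 1)" by (rule power_increasing) simp
    moreover have "v < 2 ^ (?k * ?k + 1)"
    proof -
      have mk: "m < 2 ^ (?k * ?k)" using tm(2) unfolding good_def by simp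
      show ?thesis using val_bounds[OF mk] tm(1) by simp
    qed
    ultimately show ?thesis by linarith
  qed
  have "Vals A \<subseteq> {..<2 ^ (?n * ?n + 1)}" using bnd by auto
  then show "finite (Vals A)" by (rule finite_subset) simp
  show "Vals A \<noteq> {}" using good_full[OF assms] unfolding Vals_eq by blast
qed

definition V :: "struc \<Rightarrow> nat" where "V A = Max (Vals A)"

lemma V_full:
  assumes "finite (fst A)"
  shows "\<exists>ts m. good A ts m \<and> length ts = card (fst A) \<and> V A = val (card (fst A)) m"
proof -
  let ?n = "card (fst A)"
  have VA: "V A \<in> Vals A" unfolding V_def using Vals_finite_ne[OF assms] by simp
  then obtain ts m where tm: "V A = val (length ts) m" "good A ts m" unfolding Vals_eq by blast
  obtain ts' m' where tm': "good A ts' m'" "length ts' = ?n" using good_full[OF assms] by blast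
  have "val (length ts') m' \<in> Vals A" unfolding Vals_eq using tm'(1) by blast
  then have "val ?n m' \<in> Vals A" using tm'(2) by simp
  then have le: "val ?n m' \<le> V A" unfolding V_def using Vals_finite_ne[OF assms] by simp
  have "length ts = ?n"
  proof (rule ccontr)
    let ?k = "length ts"
    assume "?k \<noteq> ?n"
    then have "?k < ?n" using good_len[OF tm(2) assms] by simp
    then have "?k * ?k + 1 \<le> ?n * ?n" by (rule sq_step)
    then have "(2::nat) ^ (?k * ?k + 1) \<le> 2 ^ (?n * ?n)" by (rule power_increasing) simp
    moreover have "V A < 2 ^ (?k * ?k + 1)"
    proof -
      have mk: "m < 2 ^ (?k * ?k)" using tm(2) unfolding good_def by simp
      show ?thesis using val_bounds[OF mk] tm(1) by simp
    qed
    moreover have "2 ^ (?n * ?n) \<le> val ?n m'"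
    proof -
      have mn: "m' < 2 ^ (?n * ?n)" using tm' unfolding good_def by simp
      show ?thesis using val_bounds[OF mn] by simp
    qed
    ultimately show False using le by linarith
  qed
  then show ?thesis using tm by auto
qed

lemma V_bounds:
  assumes "finite (fst A)"
  shows "2 ^ (card (fst A) * card (fst A)) \<le> V A \<and> V A < 2 ^ (card (fst A) * card (fst A) + 1)"
proof -
  obtain ts m where tm: "good A ts m" "length ts = card (fst A)" "V A = val (card (fst A)) m"
    using V_full[OF assms] by blast
  then have mn: "m < 2 ^ (card (fst A) * card (fst A))" unfolding good_def by simp
  show ?thesis using val_bounds[OF mn] tm(3) by simp
qed

lemma good_map:
  assumes f: "bij_betw f (fst A) (fst A')"
    "\<forall>a \<in> fst A. \<forall>b \<in> fst A. (a, b) \<in> snd A \<longleftrightarrow> (f a, f b) \<in> snd A'"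
    and g: "good A ts m"
  shows "good A' (map f ts) m"
proof -
  have sub: "set ts \<subseteq> fst A" using g unfolding good_def by blast
  have "distinct (map f ts)" using g f(1) sub unfolding good_def
    by (auto simp: distinct_map bij_betw_def intro: inj_on_subset)
  moreover have "set (map f ts) \<subseteq> fst A'" using sub f(1) by (auto simp: bij_betw_def)
  moreover have "\<forall>l1<length ts. \<forall>l2<length ts. ((f (ts ! l1), f (ts ! l2)) \<in> snd A' \<longleftrightarrow> (ts ! l1, ts ! l2) \<in> snd A)"
    using f(2) sub by (auto simp: subset_iff)
  ultimately show ?thesis using g unfolding good_def by auto
qed

lemma Vals_iso: "iso A A' \<Longrightarrow> Vals A \<subseteq> Vals A'"
proof
  fix v assume "iso A A'" "v \<in> Vals A"
  then obtain f where f: "bij_betw f (fst A) (fst A')"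
    "\<forall>a \<in> fst A. \<forall>b \<in> fst A. (a, b) \<in> snd A \<longleftrightarrow> (f a, f b) \<in> snd A'"
    unfolding iso_def by blast
  obtain ts m where tm: "v = val (length ts) m" "good A ts m" using \<open>v \<in> Vals A\<close> unfolding Vals_eq by blast
  have "good A' (map f ts) m" using good_map[OF f tm(2)] .
  then have "val (length (map f ts)) m \<in> Vals A'" unfolding Vals_eq by blast
  then show "v \<in> Vals A'" using tm(1) by simp
qed

lemma V_iso: "iso A A' \<Longrightarrow> V A = V A'"
proof -
  assume h: "iso A A'"
  have "Vals A = Vals A'" using Vals_iso[OF h] Vals_iso[OF iso_sym[OF h]] by (rule subset_antisym)
  then show ?thesis unfolding V_def by simp
qed

lemma V_inj:
  assumes "finite (fst A)" "finite (fst A')" "V A = V A'"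
  shows "iso A A'"
proof -
  let ?n = "card (fst A)" and ?n' = "card (fst A')"
  have nn: "?n = ?n'"
  proof (rule ccontr)
    assume "?n \<noteq> ?n'"
    then have "?n < ?n' \<or> ?n' < ?n" by arith
    then show False
    proof
      assume "?n < ?n'"
      then have "?n * ?n + 1 \<le> ?n' * ?n'" by (rule sq_step)
      then have "(2::nat) ^ (?n * ?n + 1) \<le> 2 ^ (?n' * ?n')" by (rule power_increasing) simp
      then show False using V_bounds[OF assms(1)] V_bounds[OF assms(2)] assms(3) by linarith
    next
      assume "?n' < ?n"
      then have "?n' * ?n' + 1 \<le> ?n * ?n" by (rule sq_step)
      then have "(2::nat) ^ (?n' * ?n' + 1) \<le> 2 ^ (?n * ?n)" by (rule power_increasing) simp
      then show False using V_bounds[OF assms(1)] V_bounds[OF assms(2)] assms(3) by linarith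
    qed
  qed
  obtain ts m where tm: "good A ts m" "length ts = ?n" "V A = val ?n m" using V_full[OF assms(1)] by blast
  obtain ts' m' where tm': "good A' ts' m'" "length ts' = ?n" "V A' = val ?n m'"
    using V_full[OF assms(2)] nn by auto
  have "m = m'" using tm(3) tm'(3) assms(3) by (simp add: val_def)
  have set_ts: "set ts = fst A"
  proof (rule card_subset_eq[OF assms(1)])
    show "set ts \<subseteq> fst A" using tm(1) unfolding good_def by simp
    show "card (set ts) = card (fst A)" using tm(1,2) unfolding good_def by (simp add: distinct_card)
  qed
  have set_ts': "set ts' = fst A'"
  proof (rule card_subset_eq[OF assms(2)])
    show "set ts' \<subseteq> fst A'" using tm'(1) unfolding good_def by simp
    show "card (set ts') = card (fst A')" using tm'(1,2) nn unfolding good_def by (simp add: distinct_card)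
  qed
  have E: "(ts ! i, ts ! j) \<in> snd A \<longleftrightarrow> odd (m div 2 ^ (i * ?n + j))" if "i < ?n" "j < ?n" for i j
    using tm(1,2) that unfolding good_def by auto
  have E': "(ts' ! i, ts' ! j) \<in> snd A' \<longleftrightarrow> odd (m' div 2 ^ (i * ?n + j))" if "i < ?n" "j < ?n" for i j
    using tm'(1,2) that unfolding good_def by auto
  have b1: "bij_betw ((!) ts) {..<?n} (fst A)"
    using tm(1,2) set_ts unfolding good_def by (intro bij_betw_nth) auto
  have b2: "bij_betw ((!) ts') {..<?n} (fst A')"
    using tm'(1,2) set_ts' unfolding good_def by (intro bij_betw_nth) auto
  let ?g = "inv_into {..<?n} ((!) ts)"
  have bg: "bij_betw ?g (fst A) {..<?n}" using b1 by (rule bij_betw_inv_into)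
  have bf: "bij_betw ((!) ts' \<circ> ?g) (fst A) (fst A')" using bg b2 by (rule bij_betw_trans)
  have "\<forall>a \<in> fst A. \<forall>b \<in> fst A. (a, b) \<in> snd A \<longleftrightarrow> (((!) ts' \<circ> ?g) a, ((!) ts' \<circ> ?g) b) \<in> snd A'"
  proof (intro ballI)
    fix a b assume ab: "a \<in> fst A" "b \<in> fst A"
    then have gi: "?g a < ?n" "?g b < ?n" using bg by (auto simp: bij_betw_def)
    have ga: "ts ! ?g a = a" "ts ! ?g b = b" using ab b1 by (auto simp: bij_betw_def f_inv_into_f)
    have "(a, b) \<in> snd A \<longleftrightarrow> odd (m div 2 ^ (?g a * ?n + ?g b))"
      using E[OF gi] ga by simp
    also have "\<dots> \<longleftrightarrow> (ts' ! ?g a, ts' ! ?g b) \<in> snd A'"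
      using E'[OF gi] \<open>m = m'\<close> by simp
    finally show "(a, b) \<in> snd A \<longleftrightarrow> (((!) ts' \<circ> ?g) a, ((!) ts' \<circ> ?g) b) \<in> snd A'" by simp
  qed
  then show ?thesis unfolding iso_def using bf by blast
qed

lemma apply_Phi2_V:
  assumes "finite (fst A)"
  shows "apply_trans Phi2 A = diagram (lo (V A))"
proof -
  have "V A \<in> Vals A" "\<And>v. v \<in> Vals A \<Longrightarrow> v \<le> V A"
    unfolding V_def using Vals_finite_ne[OF assms] by auto
  note facts = this
  show ?thesis unfolding apply_Phi2
  proof (rule set_eqI, rule iffI)
    fix \<phi> assume "\<phi> \<in> {\<phi>. \<exists>v\<in>Vals A. \<phi> \<in> diagram (lo v)}"
    then obtain v where "v \<in> Vals A" "\<phi> \<in> diagram (lo v)" by blast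
    then show "\<phi> \<in> diagram (lo (V A))" using lo_mono[of v "V A"] \<open>\<And>v. v \<in> Vals A \<Longrightarrow> v \<le> V A\<close> by blast
  next
    fix \<phi> assume "\<phi> \<in> diagram (lo (V A))"
    then show "\<phi> \<in> {\<phi>. \<exists>v\<in>Vals A. \<phi> \<in> diagram (lo v)}" using \<open>V A \<in> Vals A\<close> by blast
  qed
qed



lemma inj_enc_lit: "inj enc_lit"
proof (rule injI)
  fix l l' :: literal assume h: "enc_lit l = enc_lit l'"
  obtain p a p' a' where l: "l = (p, a)" "l' = (p', a')" by force
  have "enc_atom a = enc_atom a' \<Longrightarrow> a = a'"
    by (cases a; cases a') auto
  then show "l = l'" using h unfolding l enc_lit_def by (auto split: if_splits)
qed

definition SEa :: "nat \<Rightarrow> nat \<Rightarrow> nat \<Rightarrow> nat \<Rightarrow> nat" where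
  "SEa c B k m = (\<Sum>l1<k. \<Sum>l2<k. 2 ^ prod_encode (m div 2 ^ (l1 * k + l2) mod 2,
      prod_encode (1, prod_encode (c div B ^ l1 mod B, c div B ^ l2 mod B))))"

lemma enc_lit_rel_odd: "enc_lit (odd q, Rel a b) = prod_encode (q mod 2, prod_encode (1, prod_encode (a, b)))"
  by (cases "odd q") (auto simp: enc_lit_def odd_iff_mod_2_eq_one even_iff_mod_2_eq_zero)

lemma SEa_eq:
  assumes "cert c B k m"
  shows "set_encode (enc_lit ` alpha c B k m) = SEa c B k m"
proof -
  define F where "F = (\<lambda>(l1, l2). (odd (m div 2 ^ (l1 * k + l2)), Rel (tup c B l1) (tup c B l2)))"
  let ?D = "{..<k} \<times> {..<k}"
  have injF: "inj_on F ?D"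
  proof (rule inj_onI)
    fix x y assume "x \<in> ?D" "y \<in> ?D" "F x = F y"
    then show "x = y" using assms unfolding F_def cert_def by (auto split: prod.splits)
  qed
  have inj2: "inj_on (enc_lit \<circ> F) ?D"
    using injF inj_enc_lit by (simp add: comp_inj_on inj_on_subset)
  have "set_encode (enc_lit ` alpha c B k m) = sum ((^) 2) ((enc_lit \<circ> F) ` ?D)"
    unfolding set_encode_def alpha_def F_def by (simp add: image_comp)
  also have "\<dots> = sum ((^) 2 \<circ> (enc_lit \<circ> F)) ?D"
    using inj2 by (rule sum.reindex)
  also have "\<dots> = (\<Sum>l1<k. \<Sum>l2<k. ((^) 2 \<circ> (enc_lit \<circ> F)) (l1, l2))"
    by (simp add: sum.cartesian_product split_def)
  also have "\<dots> = SEa c B k m"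
    unfolding SEa_def F_def by (simp add: enc_lit_rel_odd tup_def)
  finally show ?thesis .
qed

lemma diagram_lo: "diagram (lo v) = {(i = j, Eq i j) | i j. i < v \<and> j < v} \<union> {(i < j, Rel i j) | i j. i < v \<and> j < v}"
proof (rule set_eqI)
  fix l :: literal
  obtain p at where l: "l = (p, at)" by force
  show "l \<in> diagram (lo v) \<longleftrightarrow> l \<in> {(i = j, Eq i j) | i j. i < v \<and> j < v} \<union> {(i < j, Rel i j) | i j. i < v \<and> j < v}"
    unfolding l by (cases at) (auto simp: lo_def)
qed

definition Q2 :: "nat \<Rightarrow> nat \<Rightarrow> nat \<Rightarrow> nat \<Rightarrow> nat \<Rightarrow> nat \<Rightarrow> nat \<Rightarrow> bool" where
  "Q2 c B k m i j x \<longleftrightarrow> (\<forall>l1<k. \<forall>l2<k. c div B ^ l1 mod B = c div B ^ l2 mod B \<longrightarrow> l1 = l2)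
     \<and> m < 2 ^ (k * k) \<and> i < 2 ^ (k * k) + m \<and> j < 2 ^ (k * k) + m
     \<and> (x = prod_encode (SEa c B k m, prod_encode (if i = j then 1 else 0, prod_encode (0, prod_encode (i, j))))
      \<or> x = prod_encode (SEa c B k m, prod_encode (if i < j then 1 else 0, prod_encode (1, prod_encode (i, j)))))"

lemma enc_lit_eq_if: "enc_lit (i = j, Eq i j) = prod_encode (if i = j then 1 else 0, prod_encode (0, prod_encode (i, j)))"
  by (simp add: enc_lit_def)

lemma enc_lit_rel_if: "enc_lit (i < j, Rel i j) = prod_encode (if i < j then 1 else 0, prod_encode (1, prod_encode (i, j)))"
  by (simp add: enc_lit_def)

lemma Phi2_enc: "enc_pair ` Phi2 = {x. \<exists>c B k m i j. Q2 c B k m i j x}"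
proof (rule set_eqI, rule iffI)
  fix x assume "x \<in> enc_pair ` Phi2"
  then obtain c B k m \<phi> where h: "cert c B k m" "\<phi> \<in> diagram (lo (val k m))"
    "x = enc_pair (alpha c B k m, \<phi>)"
    unfolding Phi2_def by blast
  have x: "x = prod_encode (SEa c B k m, enc_lit \<phi>)"
    using h(3) SEa_eq[OF h(1)] by (simp add: enc_pair_def)
  from h(2) obtain i j where ij: "i < val k m" "j < val k m"
    "\<phi> = (i = j, Eq i j) \<or> \<phi> = (i < j, Rel i j)"
    unfolding diagram_lo by blast
  have "Q2 c B k m i j x"
    unfolding Q2_def using h(1) ij x
    by (auto simp: cert_def tup_def val_def enc_lit_def)
  then show "x \<in> {x. \<exists>c B k m i j. Q2 c B k m i j x}" by blast
next
  fix x assume "x \<in> {x. \<exists>c B k m i j. Q2 c B k m i j x}"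
  then obtain c B k m i j where q: "Q2 c B k m i j x" by blast
  have cert: "cert c B k m" using q unfolding Q2_def cert_def tup_def by blast
  have ij: "i < val k m" "j < val k m" using q unfolding Q2_def val_def by auto
  have "x = prod_encode (SEa c B k m, enc_lit (i = j, Eq i j)) \<or> x = prod_encode (SEa c B k m, enc_lit (i < j, Rel i j))"
    using q unfolding Q2_def enc_lit_eq_if enc_lit_rel_if by blast
  then obtain \<phi> where \<phi>: "\<phi> \<in> diagram (lo (val k m))" "x = prod_encode (SEa c B k m, enc_lit \<phi>)"
    using ij unfolding diagram_lo by blast
  have "x = enc_pair (alpha c B k m, \<phi>)"
    using \<phi>(2) SEa_eq[OF cert] by (simp add: enc_pair_def)
  moreover have "(alpha c B k m, \<phi>) \<in> Phi2" unfolding Phi2_def using cert \<phi>(1) by blast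
  ultimately show "x \<in> enc_pair ` Phi2" by blast
qed

lemma Phi2_enc_bounded: "{x. \<exists>c B k m i j. Q2 c B k m i j x}
   = {x. \<exists>N. \<exists>c<N. \<exists>B<N. \<exists>k<N. \<exists>m<N. \<exists>i<N. \<exists>j<N. Q2 c B k m i j x}"
proof (rule set_eqI, rule iffI)
  fix x assume "x \<in> {x. \<exists>c B k m i j. Q2 c B k m i j x}"
  then obtain c B k m i j where q: "Q2 c B k m i j x" by blast
  define N where "N = Suc (c + B + k + m + i + j)"
  have "c < N" "B < N" "k < N" "m < N" "i < N" "j < N" unfolding N_def by auto
  then show "x \<in> {x. \<exists>N. \<exists>c<N. \<exists>B<N. \<exists>k<N. \<exists>m<N. \<exists>i<N. \<exists>j<N. Q2 c B k m i j x}"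
    using q by blast
qed blast

lemma Phi2_ce: "ce (enc_pair ` Phi2)"
  unfolding Phi2_enc unfolding Phi2_enc_bounded unfolding Q2_def SEa_def
  by (rule ce_search)
     (intro prp_ex prp_all prp_disj prp_conj prp_imp prp_eq prp_less prf_prod_encode prf_sum prf_if
        prf_pow prf_mod prf_div prf_add prf_mult prf_const prf_hd prf_tl prf_nth; simp?)



lemma Phi2_wit:
  assumes "cert c b k m"
  shows "finite (alpha c b k m) \<and> (\<exists>B. wf_struc B \<and> finite (fst B) \<and> alpha c b k m \<subseteq> diagram B)"
proof -
  define ts where "ts = map (tup c b) [0..<k]"
  have len: "length ts = k" unfolding ts_def by simp
  have dist: "distinct ts" using assms unfolding cert_def ts_def by (auto simp: distinct_conv_nth)
  define B0 :: struc where "B0 = (set ts, {(ts ! l1, ts ! l2) | l1 l2. l1 < k \<and> l2 < k \<and> odd (m div 2 ^ (l1 * k + l2))})"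
  have wf: "wf_struc B0" unfolding B0_def wf_struc_def using len by auto
  have "good B0 ts m"
    unfolding good_def
  proof (intro conjI allI impI)
    show "distinct ts" by (rule dist)
    show "set ts \<subseteq> fst B0" unfolding B0_def by simp
    show "m < 2 ^ (length ts * length ts)" using assms len unfolding cert_def by simp
  next
    fix l1 l2 assume l: "l1 < length ts" "l2 < length ts"
    show "(ts ! l1, ts ! l2) \<in> snd B0 \<longleftrightarrow> odd (m div 2 ^ (l1 * length ts + l2))"
    proof
      assume "(ts ! l1, ts ! l2) \<in> snd B0"
      then obtain l1' l2' where h: "ts ! l1 = ts ! l1'" "ts ! l2 = ts ! l2'" "l1' < k" "l2' < k"
        "odd (m div 2 ^ (l1' * k + l2'))" unfolding B0_def by auto
      then have "l1 = l1'" "l2 = l2'" using dist l len by (simp_all add: nth_eq_iff_index_eq)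
      then show "odd (m div 2 ^ (l1 * length ts + l2))" using h(5) len by simp
    next
      assume "odd (m div 2 ^ (l1 * length ts + l2))"
      then show "(ts ! l1, ts ! l2) \<in> snd B0" unfolding B0_def using l len by auto
    qed
  qed
  then have "alpha c b k m \<subseteq> diagram B0" using alpha_sub[OF assms] unfolding ts_def by simp
  moreover have "finite (fst B0)" unfolding B0_def by simp
  moreover have "finite (alpha c b k m)" unfolding alpha_def by simp
  ultimately show ?thesis using wf by blast
qed

lemma FUG_le_FLO: "FUG \<le>\<^sub>c FLO"
  unfolding c_reducible_def
proof (intro exI[of _ Phi2])
  show "comp_embedding Phi2 FUG FLO"
    unfolding comp_embedding_def comp_transformation_def
  proof (intro conjI ballI allI impI)
    show "ce (enc_pair ` Phi2)" by (rule Phi2_ce)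
  next
    fix p assume "p \<in> Phi2"
    then obtain c b k m \<phi> where "p = (alpha c b k m, \<phi>)" "cert c b k m"
      unfolding Phi2_def by blast
    then show "case p of (\<alpha>, \<phi>) \<Rightarrow> finite \<alpha> \<and> (\<exists>B. wf_struc B \<and> finite (fst B) \<and> \<alpha> \<subseteq> diagram B)"
      using Phi2_wit by simp
  next
    fix A assume "A \<in> FUG"
    then have "finite (fst A)" by (simp add: FUG_def)
    then show "\<exists>B\<in>FLO. apply_trans Phi2 A = diagram B"
      using apply_Phi2_V lo_FLO by blast
  next
    fix A A' B B' assume as: "A \<in> FUG" "A' \<in> FUG" "B \<in> FLO" "B' \<in> FLO"
      "apply_trans Phi2 A = diagram B" "apply_trans Phi2 A' = diagram B'"
    have fin: "finite (fst A)" "finite (fst A')" using as(1,2) by (auto simp: FUG_def)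
    have wfl: "wf_struc (lo v)" for v using lo_FLO by (simp add: FLO_def)
    have "B = lo (V A)"
      using as(3,5) apply_Phi2_V[OF fin(1)] wfl by (intro diagram_inj) (auto simp: FLO_def)
    moreover have "B' = lo (V A')"
      using as(4,6) apply_Phi2_V[OF fin(2)] wfl by (intro diagram_inj) (auto simp: FLO_def)
    moreover have "iso A A' \<longleftrightarrow> V A = V A'" using V_iso[of A A'] V_inj[OF fin] by blast
    ultimately show "iso A A' \<longleftrightarrow> iso B B'"
      using iso_lo by simp
  qed
qed

theorem theorem2p5:
  shows "FUG \<equiv>\<^sub>c FLO"
  unfolding c_equivalent_def using FUG_le_FLO FLO_le_FUG by blast


end
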